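(* Let $N\ge1$, $\theta\in[0,1)$, and real numbers $a_0,\dots,a_N$ with $\sum_k a_k^2=1$. Define the probability distribution $\Pr(l)=\frac{1}{N+1}\bigl|\sum_{k=0}^N a_k e^{2\pi i k(\theta-l/(N+1))}\bigr|^2$ for $l=0,\dots,N$, and $W=\sum_{l=0}^N\Pr(l)\bigl[1-\cos\bigl(2\pi(\theta-\tfrac{l}{N+1})\bigr)\bigr]$. Then $W=1-\sum_{k=1}^N a_{k-1}a_k-a_0a_N\cos(2\pi(N+1)\theta)$. Consequently, if $a_0=0$ then $W$ is independent of $\theta$, and the minimum of $W$ over all real $a_1,\dots,a_N$ with $\sum_{k=1}^N a_k^2=1$ (and $a_0=0$) equals $2\sin^2\frac{\pi}{2N+2}$, attained at $a_k=\sqrt{\frac{2}{N+1}}\sin\frac{k\pi}{N+1}$.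
   Context: This $W$ is the expected value of $1-\cos(2\pi(\hat\theta-\theta))$ for the estimator $\hat\theta=l/(N+1)$ of the phase $\theta$ of $U=\mathrm{diag}(1,e^{2\pi i\theta})$ in the parallel entangled strategy with Fourier-basis measurement. *)

theory Defs
  imports Complex_Main
begin

definition Prob :: "nat \<Rightarrow> (nat \<Rightarrow> real) \<Rightarrow> real \<Rightarrow> nat \<Rightarrow> real" where
  "Prob N a \<theta> l = (1 / real (N + 1)) *
     (cmod (\<Sum>k=0..N. complex_of_real (a k) *
        cis (2 * pi * real k * (\<theta> - real l / real (N + 1))))) ^ 2"

definition W :: "nat \<Rightarrow> (nat \<Rightarrow> real) \<Rightarrow> real \<Rightarrow> real" where
  "W N a \<theta> = (\<Sum>l=0..N. Prob N a \<theta> l * (1 - cos (2 * pi * (\<theta> - real l / real (N + 1)))))"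

definition a_opt :: "nat \<Rightarrow> nat \<Rightarrow> real" where
  "a_opt N k = sqrt (2 / real (N + 1)) * sin (real k * pi / real (N + 1))"

end

theory Submission
  imports Defs
begin
lemma geo:
  fixes m :: int and N :: nat and \<theta> :: real
  shows "(\<Sum>l=0..N. cis (real_of_int m * (2*pi*(\<theta> - real l / real (N+1))))) =
     (if int (N+1) dvd m then of_nat (N+1) * cis (2*pi*m*\<theta>) else 0)"
proof -
  define q where "q = cis (- 2*pi*m/(N+1))"
  have tm: "cis (m * (2*pi*(\<theta> - l/(N+1)))) = cis(2*pi*m*\<theta>) * q^l" for l :: nat
    unfolding q_def DeMoivre cis_mult by (simp add: field_simps)
  have S: "(\<Sum>l=0..N. cis (real_of_int m * (2*pi*(\<theta> - real l / real (N+1))))) = cis(2*pi*m*\<theta>) * (\<Sum>l<N+1. q^l)"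
    unfolding tm by (simp add: sum_distrib_left atLeast0AtMost lessThan_Suc_atMost)
  have P: "q^(N+1) = 1"
  proof -
    have e: "real (N+1) * (- 2*pi*m/(N+1)) = 2*pi*(-m)"
    proof -
      have "real (N+1) \<noteq> 0" by (simp del: of_nat_Suc)
      then show ?thesis by (simp only: times_divide_eq_right nonzero_mult_div_cancel_left) simp
    qed
    have "q^(N+1) = cis (2*pi*(-m))" unfolding q_def DeMoivre e ..
    also have "\<dots> = 1" by (rule cis_multiple_2pi) simp
    finally show ?thesis .
  qed
  have Q: "q = 1 \<longleftrightarrow> int (N+1) dvd m"
  proof
    assume "q = 1"
    then have "cos (- 2*pi*m/(N+1)) = 1" unfolding q_def by (metis cis.sel(1) one_complex.sel(1))
    then obtain n :: int where n: "- 2*pi*m/(N+1) = real_of_int n * 2 * pi" using cos_one_2pi_int by blast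
    have nz: "real (N+1) \<noteq> 0" by (simp del: of_nat_Suc)
    have "-2*pi*m = real_of_int n*2*pi*real(N+1)" using n nz by (simp add: field_simps)
    then have "pi * (real_of_int (-m) - real_of_int n * real(N+1)) = 0" by (simp add: algebra_simps)
    then have "real_of_int (-m) = real_of_int n * real(N+1)" by simp
    then have "real_of_int m = real_of_int (- n * int (N+1))" by simp
    then have "m = - n * int (N+1)" by linarith
    then show "int (N+1) dvd m" by simp
  next
    assume "int (N+1) dvd m"
    then obtain t where t: "m = int (N+1) * t" by blast
    have nz: "1 + real N \<noteq> 0" by (metis add_eq_0_iff_both_eq_0 of_nat_0_le_iff one_neq_zero add.commute le_add_same_cancel1 not_one_le_zero)
    have "- 2*pi*real_of_int (int (N+1) * t)/real(N+1) = 2*pi*(-t)" using nz by (simp add: field_simps)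
    then have "q = cis (2*pi*(-t))" unfolding q_def t by (simp add: mult.assoc)
    also have "\<dots> = 1" by (rule cis_multiple_2pi) simp
    finally show "q = 1" .
  qed
  show ?thesis
  proof (cases "int (N+1) dvd m")
    case False
    with Q have "q \<noteq> 1" by simp
    then have "(\<Sum>l<N+1. q^l) = 0" using geometric_sum[of q "N+1"] P by simp
    then show ?thesis using S False by simp
  qed (use S Q in \<open>simp add: lessThan_Suc_atMost[symmetric]\<close>)
qed

lemma cis_prod3:
  fixes j k :: nat and w :: real
  shows "cis (real j * w) * cis (- (real k * w)) = cis (real_of_int (int j - int k) * w)"
    and "cis (real_of_int (int j - int k) * w) * cis w = cis (real_of_int (int j - int k + 1) * w)"
    and "cis (real_of_int (int j - int k) * w) * cis (-w) = cis (real_of_int (int j - int k - 1) * w)"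
  by (simp_all add: cis_mult algebra_simps)

lemma cos_cis: "complex_of_real (cos w) = (cis w + cis (-w)) / 2"
  by (simp add: complex_eq_iff cis.ctr)

lemma expand_l:
  fixes a :: "nat \<Rightarrow> real" and w :: real
  shows "complex_of_real ((cmod (\<Sum>k=0..N. complex_of_real (a k) * cis (real k * w)))^2 * (1 - cos w)) =
    (\<Sum>j=0..N. \<Sum>k=0..N. complex_of_real (a j * a k) * (cis (real_of_int (int j - int k) * w)
        - cis (real_of_int (int j - int k + 1) * w) / 2 - cis (real_of_int (int j - int k - 1) * w) / 2))"
  (is "_ = ?rhs")
proof -
  have "complex_of_real ((cmod (\<Sum>k=0..N. complex_of_real (a k) * cis (real k * w)))^2 * (1 - cos w))
     = (\<Sum>k=0..N. complex_of_real (a k) * cis (real k * w)) * cnj (\<Sum>k=0..N. complex_of_real (a k) * cis (real k * w)) * (1 - (cis w + cis (-w)) / 2)"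
    by (simp only: of_real_mult complex_norm_square of_real_diff of_real_1 cos_cis)
  also have "\<dots> = (\<Sum>j=0..N. \<Sum>k=0..N. (complex_of_real (a j) * cis (real j * w)) * (complex_of_real (a k) * cis (- (real k * w)))) * (1 - (cis w + cis (-w)) / 2)"
    by (simp add: cnj_sum sum_product cis_cnj)
  also have "\<dots> = (\<Sum>j=0..N. \<Sum>k=0..N. (complex_of_real (a j) * cis (real j * w)) * (complex_of_real (a k) * cis (- (real k * w))) * (1 - (cis w + cis (-w)) / 2))"
    by (simp add: sum_distrib_right)
  also have "\<dots> = ?rhs"
  proof (intro sum.cong refl)
    fix j k
    have "(complex_of_real (a j) * cis (real j * w)) * (complex_of_real (a k) * cis (- (real k * w))) * (1 - (cis w + cis (-w)) / 2)
       = complex_of_real (a j * a k) * ((cis (real j * w) * cis (- (real k * w)))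
         - (cis (real j * w) * cis (- (real k * w))) * cis w / 2 - (cis (real j * w) * cis (- (real k * w))) * cis (-w) / 2)"
      by (simp add: algebra_simps)
    also have "\<dots> = complex_of_real (a j * a k) * (cis (real_of_int (int j - int k) * w)
        - cis (real_of_int (int j - int k + 1) * w) / 2 - cis (real_of_int (int j - int k - 1) * w) / 2)"
      by (simp only: cis_prod3)
    finally show "(complex_of_real (a j) * cis (real j * w)) * (complex_of_real (a k) * cis (- (real k * w))) * (1 - (cis w + cis (-w)) / 2)
       = complex_of_real (a j * a k) * (cis (real_of_int (int j - int k) * w)
        - cis (real_of_int (int j - int k + 1) * w) / 2 - cis (real_of_int (int j - int k - 1) * w) / 2)" .
  qed
  finally show ?thesis .
qed

lemma dvd_range:
  fixes x :: int and M :: nat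
  assumes "int M dvd x" "- int M \<le> x" "x \<le> int M"
  shows "x = 0 \<or> x = int M \<or> x = - int M"
proof -
  obtain t where t: "x = int M * t" using assms(1) by blast
  have "M > 0 \<or> x = 0" using t by auto
  moreover
  { assume M: "M > 0"
    have "t \<le> 1"
    proof (rule ccontr)
      assume "\<not> t \<le> 1" then have "t \<ge> 2" by simp
      then have "int M * t \<ge> int M * 2" using M by (intro mult_left_mono) auto
      then show False using assms t M by simp
    qed
    moreover have "t \<ge> -1"
    proof (rule ccontr)
      assume "\<not> t \<ge> -1" then have "t \<le> -2" by simp
      then have "int M * t \<le> int M * (-2)" using M by (intro mult_left_mono) auto
      then show False using assms t M by simp
    qed
    ultimately have "t = -1 \<or> t = 0 \<or> t = 1" by auto
    then have ?thesis using t by auto }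
  ultimately show ?thesis by auto
qed

lemma dsum_shift:
  fixes g :: "nat \<Rightarrow> 'a::comm_monoid_add"
  shows "(\<Sum>j=0..N. if j + 1 \<le> N then g j else 0) = (\<Sum>k=1..N. g (k - 1))"
proof -
  have "(\<Sum>j=0..N. if j + 1 \<le> N then g j else 0) = (\<Sum>j\<in>{0..N} \<inter> {j. j + 1 \<le> N}. g j)"
    by (simp add: sum.inter_restrict)
  also have "{0..N} \<inter> {j. j + 1 \<le> N} = {..<N}" by auto
  also have "(\<Sum>j<N. g j) = (\<Sum>k=1..N. g (k - 1))"
    by (induction N) (auto simp: sum.cl_ivl_Suc)
  finally show ?thesis .
qed

lemma dsum1:
  fixes f :: "nat \<Rightarrow> nat \<Rightarrow> 'a::comm_monoid_add"
  shows "(\<Sum>j=0..N. \<Sum>k=0..N. if k = j + 1 then f j k else 0) = (\<Sum>k=1..N. f (k - 1) k)"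
proof -
  have "(\<Sum>j=0..N. \<Sum>k=0..N. if k = j + 1 then f j k else 0) = (\<Sum>j=0..N. if j + 1 \<le> N then f j (j+1) else 0)"
    by (intro sum.cong refl) (simp add: sum.delta')
  also have "\<dots> = (\<Sum>k=1..N. f (k - 1 ) (k - 1 + 1))" by (rule dsum_shift)
  also have "\<dots> = (\<Sum>k=1..N. f (k - 1) k)" by (intro sum.cong refl) auto
  finally show ?thesis .
qed

lemma dsum2:
  fixes f :: "nat \<Rightarrow> nat \<Rightarrow> 'a::comm_monoid_add"
  shows "(\<Sum>j=0..N. \<Sum>k=0..N. if j = k + 1 then f j k else 0) = (\<Sum>k=1..N. f k (k - 1))"
proof -
  have "(\<Sum>j=0..N. \<Sum>k=0..N. if j = k + 1 then f j k else 0) = (\<Sum>k=0..N. \<Sum>j=0..N. if j = k + 1 then f j k else 0)"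
    by (rule sum.swap)
  also have "\<dots> = (\<Sum>k=1..N. f k (k - 1))" using dsum1[of "\<lambda>k j. f j k" N] by simp
  finally show ?thesis .
qed

lemma dsum0:
  fixes f :: "nat \<Rightarrow> nat \<Rightarrow> 'a::comm_monoid_add"
  shows "(\<Sum>j=0..N. \<Sum>k=0..N. if j = k then f j k else 0) = (\<Sum>k=0..N. f k k)"
  by (intro sum.cong refl) (simp add: sum.delta)

lemma dsum_pt:
  fixes f :: "nat \<Rightarrow> nat \<Rightarrow> 'a::comm_monoid_add"
  assumes "p \<le> N" "q \<le> N"
  shows "(\<Sum>j=0..N. \<Sum>k=0..N. if j = p \<and> k = q then f j k else 0) = f p q"
proof -
  have "(\<Sum>j=0..N. \<Sum>k=0..N. if j = p \<and> k = q then f j k else 0) = (\<Sum>j=0..N. if j = p then f j q else 0)"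
    by (intro sum.cong refl) (use assms in \<open>auto simp: sum.delta'\<close>)
  also have "\<dots> = f p q" using assms by (simp add: sum.delta')
  finally show ?thesis .
qed

definition Hc :: "nat \<Rightarrow> real \<Rightarrow> int \<Rightarrow> complex" where
  "Hc N \<theta> m = (if int (N+1) dvd m then cis (2*pi*real_of_int m*\<theta>) else 0)"

lemma H0:
  assumes "j \<le> N" "k \<le> N"
  shows "Hc N \<theta> (int j - int k) = (if j = k then 1 else 0)"
proof (cases "int (N+1) dvd (int j - int k)")
  case True
  then have "int j - int k = 0 \<or> int j - int k = int (N+1) \<or> int j - int k = - int (N+1)"
    using assms by (intro dvd_range) auto
  then have "j = k" using assms by auto
  then show ?thesis by (simp add: Hc_def)
next
  case False
  then have "j \<noteq> k" by auto
  then show ?thesis using False by (simp add: Hc_def)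
qed

lemma H1:
  assumes "j \<le> N" "k \<le> N"
  shows "Hc N \<theta> (int j - int k + 1) = (if k = j + 1 then 1 else 0)
     + (if j = N \<and> k = 0 then cis (2*pi*real (N+1)*\<theta>) else 0)"
proof (cases "int (N+1) dvd (int j - int k + 1)")
  case True
  then have "int j - int k + 1 = 0 \<or> int j - int k + 1 = int (N+1) \<or> int j - int k + 1 = - int (N+1)"
    using assms by (intro dvd_range) auto
  then have "(k = j + 1 \<and> \<not> (j = N \<and> k = 0)) \<or> (j = N \<and> k = 0)" using assms by auto
  then show ?thesis
  proof
    assume "k = j + 1 \<and> \<not> (j = N \<and> k = 0)"
    then show ?thesis by (simp add: Hc_def)
  next
    assume "j = N \<and> k = 0"
    then show ?thesis using True by (simp add: Hc_def algebra_simps)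
  qed
next
  case False
  have "k \<noteq> j + 1" using False by auto
  moreover have "\<not> (j = N \<and> k = 0)"
  proof
    assume "j = N \<and> k = 0"
    then have "int j - int k + 1 = int (N+1)" by simp
    then show False using False by (metis dvd_refl)
  qed
  ultimately show ?thesis using False by (simp add: Hc_def)
qed

lemma H2:
  assumes "j \<le> N" "k \<le> N"
  shows "Hc N \<theta> (int j - int k - 1) = (if j = k + 1 then 1 else 0)
     + (if j = 0 \<and> k = N then cis (- (2*pi*real (N+1)*\<theta>)) else 0)"
proof (cases "int (N+1) dvd (int j - int k - 1)")
  case True
  then have "int j - int k - 1 = 0 \<or> int j - int k - 1 = int (N+1) \<or> int j - int k - 1 = - int (N+1)"
    using assms by (intro dvd_range) auto
  then have "(j = k + 1 \<and> \<not> (j = 0 \<and> k = N)) \<or> (j = 0 \<and> k = N)" using assms by auto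
  then show ?thesis
  proof
    assume "j = k + 1 \<and> \<not> (j = 0 \<and> k = N)"
    then show ?thesis by (simp add: Hc_def)
  next
    assume jk: "j = 0 \<and> k = N"
    then have j0: "j = 0" and kN: "k = N" by auto
    have e: "2*pi*real_of_int(int 0 - int N - 1)*\<theta> = -(2*pi*real(N+1)*\<theta>)" by (simp add: algebra_simps)
    have d0: "int 0 - int N - 1 = - int (N+1)" by simp
    have d: "int (N+1) dvd (int 0 - int N - 1)" unfolding d0 by (rule dvd_minus_iff[THEN iffD2]) simp
    have "Hc N \<theta> (int 0 - int N - 1) = cis (-(2*pi*real(N+1)*\<theta>))" unfolding Hc_def if_P[OF d] e ..
    then show ?thesis using j0 kN by simp
  qed
next
  case False
  have "j \<noteq> k + 1" using False by auto
  moreover have "\<not> (j = 0 \<and> k = N)"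
  proof
    assume "j = 0 \<and> k = N"
    then have "int j - int k - 1 = - int (N+1)" by simp
    then show False using False by (metis dvd_refl dvd_minus_iff)
  qed
  ultimately show ?thesis using False by (simp add: Hc_def)
qed

lemma geo':
  "(\<Sum>l=0..N. cis (real_of_int m * (2*pi*(\<theta> - real l / real (N+1))))) = of_nat (N+1) * Hc N \<theta> m"
  unfolding geo Hc_def by (cases "int (N+1) dvd m") simp_all

lemma lsum:
  fixes c :: complex
  shows "(\<Sum>l=0..N. c * (A l - B l / 2 - C l / 2)) = c * ((\<Sum>l=0..N. A l) - (\<Sum>l=0..N. B l) / 2 - (\<Sum>l=0..N. C l) / 2)"
  by (simp add: sum_distrib_left sum_subtractf sum_divide_distrib right_diff_distrib)

lemma cancel3:
  fixes M X K A B C :: complex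
  shows "M * X * (K * A - K * B / 2 - K * C / 2) = X * (M * K) * (A - B / 2 - C / 2)"
  by (simp add: algebra_simps)

lemma W_complex:
  fixes a :: "nat \<Rightarrow> real"
  shows "complex_of_real (W N a \<theta>) = (\<Sum>j=0..N. \<Sum>k=0..N. complex_of_real (a j * a k) *
     (Hc N \<theta> (int j - int k) - Hc N \<theta> (int j - int k + 1) / 2 - Hc N \<theta> (int j - int k - 1) / 2))"
  (is "_ = ?rhs")
proof -
  define w where "w l = 2*pi*(\<theta> - real l / real (N+1))" for l :: nat
  define M where "M = complex_of_real (1 / real (N+1))"
  have M: "M * of_nat (N+1) = 1" unfolding M_def by (simp del: of_nat_Suc add: field_simps)
  have p: "complex_of_real (Prob N a \<theta> l * (1 - cos (2 * pi * (\<theta> - real l / real (N + 1)))))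
     = M * complex_of_real ((cmod (\<Sum>k=0..N. complex_of_real (a k) * cis (real k * w l)))^2 * (1 - cos (w l)))" for l
    unfolding Prob_def w_def M_def by (simp add: mult_ac)
  have "complex_of_real (W N a \<theta>) = (\<Sum>l=0..N. M * (\<Sum>j=0..N. \<Sum>k=0..N. complex_of_real (a j * a k) * (cis (real_of_int (int j - int k) * w l)
        - cis (real_of_int (int j - int k + 1) * w l) / 2 - cis (real_of_int (int j - int k - 1) * w l) / 2)))"
    unfolding W_def of_real_sum p expand_l ..
  also have "\<dots> = (\<Sum>l=0..N. \<Sum>j=0..N. \<Sum>k=0..N. M * (complex_of_real (a j * a k) * (cis (real_of_int (int j - int k) * w l)
        - cis (real_of_int (int j - int k + 1) * w l) / 2 - cis (real_of_int (int j - int k - 1) * w l) / 2)))"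
    by (simp add: sum_distrib_left)
  also have "\<dots> = (\<Sum>j=0..N. \<Sum>l=0..N. \<Sum>k=0..N. M * (complex_of_real (a j * a k) * (cis (real_of_int (int j - int k) * w l)
        - cis (real_of_int (int j - int k + 1) * w l) / 2 - cis (real_of_int (int j - int k - 1) * w l) / 2)))"
    by (rule sum.swap)
  also have "\<dots> = (\<Sum>j=0..N. \<Sum>k=0..N. \<Sum>l=0..N. (M * complex_of_real (a j * a k)) * (cis (real_of_int (int j - int k) * w l)
        - cis (real_of_int (int j - int k + 1) * w l) / 2 - cis (real_of_int (int j - int k - 1) * w l) / 2))"
    by (rule sum.cong[OF refl], subst sum.swap) (simp add: mult.assoc)
  also have "\<dots> = ?rhs"
  proof (intro sum.cong refl)
    fix j k
    show "(\<Sum>l=0..N. (M * complex_of_real (a j * a k)) * (cis (real_of_int (int j - int k) * w l)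
        - cis (real_of_int (int j - int k + 1) * w l) / 2 - cis (real_of_int (int j - int k - 1) * w l) / 2))
        = complex_of_real (a j * a k) *
     (Hc N \<theta> (int j - int k) - Hc N \<theta> (int j - int k + 1) / 2 - Hc N \<theta> (int j - int k - 1) / 2)"
      unfolding lsum unfolding w_def geo' cancel3 M by simp
  qed
  finally show ?thesis .
qed

lemma W_formula:
  fixes a :: "nat \<Rightarrow> real"
  assumes "(\<Sum>k=0..N. (a k)^2) = 1"
  shows "W N a \<theta> = 1 - (\<Sum>k=1..N. a (k - 1) * a k) - a 0 * a N * cos (2 * pi * real (N + 1) * \<theta>)"
proof -
  define C where "C = cis (2*pi*real (N+1)*\<theta>)"
  define C' where "C' = cis (- (2*pi*real (N+1)*\<theta>))"
  define x where "x j k = complex_of_real (a j * a k)" for j k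
  have pt: "x j k * (Hc N \<theta> (int j - int k) - Hc N \<theta> (int j - int k + 1) / 2 - Hc N \<theta> (int j - int k - 1) / 2)
     = (if j = k then x j k else 0) - (if k = j + 1 then x j k else 0) / 2 - (if j = N \<and> k = 0 then x j k * C else 0) / 2
       - (if j = k + 1 then x j k else 0) / 2 - (if j = 0 \<and> k = N then x j k * C' else 0) / 2"
    if "j \<in> {0..N}" "k \<in> {0..N}" for j k
  proof -
    have jN: "j \<le> N" "k \<le> N" using that by auto
    show ?thesis unfolding H0[OF jN] H1[OF jN] H2[OF jN] C_def[symmetric] C'_def[symmetric]
      by (simp add: algebra_simps)
  qed
  have "complex_of_real (W N a \<theta>) = (\<Sum>j=0..N. \<Sum>k=0..N. (if j = k then x j k else 0) - (if k = j + 1 then x j k else 0) / 2 - (if j = N \<and> k = 0 then x j k * C else 0) / 2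
       - (if j = k + 1 then x j k else 0) / 2 - (if j = 0 \<and> k = N then x j k * C' else 0) / 2)"
    unfolding W_complex x_def[symmetric] by (intro sum.cong refl pt)
  also have "\<dots> = (\<Sum>j=0..N. \<Sum>k=0..N. if j = k then x j k else 0) - (\<Sum>j=0..N. \<Sum>k=0..N. if k = j + 1 then x j k else 0) / 2
       - (\<Sum>j=0..N. \<Sum>k=0..N. if j = N \<and> k = 0 then x j k * C else 0) / 2
       - (\<Sum>j=0..N. \<Sum>k=0..N. if j = k + 1 then x j k else 0) / 2 - (\<Sum>j=0..N. \<Sum>k=0..N. if j = 0 \<and> k = N then x j k * C' else 0) / 2"
    by (simp only: sum_subtractf sum_divide_distrib)
  also have "\<dots> = (\<Sum>k=0..N. x k k) - (\<Sum>k=1..N. x (k - 1) k) / 2 - x N 0 * C / 2 - (\<Sum>k=1..N. x k (k - 1)) / 2 - x 0 N * C' / 2"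
    unfolding dsum0 dsum1 dsum2 dsum_pt[OF order_refl le0] dsum_pt[OF le0 order_refl] ..
  also have "\<dots> = complex_of_real (1 - (\<Sum>k=1..N. a (k - 1) * a k) - a 0 * a N * cos (2 * pi * real (N + 1) * \<theta>))"
  proof -
    have "(\<Sum>k=0..N. x k k) = complex_of_real (\<Sum>k=0..N. (a k)^2)" unfolding x_def of_real_sum by (simp only: power2_eq_square)
    then have s0: "(\<Sum>k=0..N. x k k) = 1" using assms by simp
    have s1: "(\<Sum>k=1..N. x k (k - 1)) = complex_of_real (\<Sum>k=1..N. a (k - 1) * a k)"
      unfolding x_def of_real_sum by (simp add: mult.commute)
    have s2: "(\<Sum>k=1..N. x (k - 1) k) = complex_of_real (\<Sum>k=1..N. a (k - 1) * a k)"
      unfolding x_def of_real_sum by simp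
    have cc: "complex_of_real (cos (2 * pi * real (N + 1) * \<theta>)) = (C + C') / 2"
      unfolding C_def C'_def cos_cis ..
    have e1: "x N 0 = complex_of_real (a 0 * a N)" "x 0 N = complex_of_real (a 0 * a N)"
      by (simp_all add: x_def mult.commute)
    have aux: "1 - R/2 - y*C/2 - R/2 - y*C'/2 = 1 - R - y*((C+C')/2)" for R y :: complex
      by (simp add: field_simps)
    show ?thesis unfolding s0 s1 s2 e1 aux cc[symmetric] by simp
  qed
  finally show ?thesis by (simp only: of_real_eq_iff)
qed

lemma shift_sum:
  fixes g :: "nat \<Rightarrow> real"
  shows "(\<Sum>k=1..N. g (k - 1)) + g N = g 0 + (\<Sum>k=1..N. g k)"
  by (induction N) (auto simp: sum.cl_ivl_Suc)

lemma amgm: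
  fixes p u v :: real
  assumes "p > 0"
  shows "u * v \<le> (p * u^2 + v^2 / p) / 2"
proof -
  have "0 \<le> (p * u - v)^2 / p" using assms by simp
  also have "(p * u - v)^2 / p = p * u^2 + v^2 / p - 2 * u * v" using assms
    by (simp add: power2_eq_square field_simps)
  finally show ?thesis by simp
qed

lemma eig_bound:
  fixes s a :: "nat \<Rightarrow> real" and c :: real
  assumes s0: "s 0 = 0" and sN: "s (N+1) = 0" and spos: "\<And>k. 1 \<le> k \<Longrightarrow> k \<le> N \<Longrightarrow> s k > 0"
    and rec: "\<And>k. 1 \<le> k \<Longrightarrow> k \<le> N \<Longrightarrow> s (k - 1) + s (k + 1) = 2 * c * s k"
    and a0: "a 0 = 0"
  shows "(\<Sum>k=1..N. a (k - 1) * a k) \<le> c * (\<Sum>k=1..N. (a k)^2)"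
proof -
  define g where "g j = s (j+1) / s j * (a j)^2" for j
  have tm1: "a (k - 1) * a k \<le> (g (k - 1) + s (k - 1) / s k * (a k)^2) / 2" if "k \<in> {1..N}" for k
  proof (cases "k = 1")
    case True
    then show ?thesis using a0 s0 by (simp add: g_def)
  next
    case False
    then have k: "2 \<le> k" "k \<le> N" using that by auto
    have p1: "s k > 0" "s (k - 1) > 0" using k spos by auto
    have "a (k - 1) * a k \<le> ((s k / s (k - 1)) * (a (k - 1))^2 + (a k)^2 / (s k / s (k - 1))) / 2"
      by (rule amgm) (use p1 in simp)
    also have "\<dots> = (g (k - 1) + s (k - 1) / s k * (a k)^2) / 2"
      unfolding g_def using k by (simp add: field_simps)
    finally show ?thesis .
  qed
  have "(\<Sum>k=1..N. a (k - 1) * a k) \<le> (\<Sum>k=1..N. (g (k - 1) + s (k - 1) / s k * (a k)^2) / 2)"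
    by (rule sum_mono) (rule tm1)
  also have "\<dots> = ((\<Sum>k=1..N. g (k - 1)) + (\<Sum>k=1..N. s (k - 1) / s k * (a k)^2)) / 2"
    by (simp only: sum_divide_distrib[symmetric] sum.distrib)
  also have "(\<Sum>k=1..N. g (k - 1)) = (\<Sum>k=1..N. g k)"
    using shift_sum[of g N] a0 sN by (simp add: g_def)
  also have "((\<Sum>k=1..N. g k) + (\<Sum>k=1..N. s (k - 1) / s k * (a k)^2)) / 2
      = (\<Sum>k=1..N. ((s (k + 1) + s (k - 1)) / s k) * (a k)^2) / 2"
    by (simp add: g_def sum.distrib[symmetric] add_divide_distrib distrib_right)
  also have "\<dots> = (\<Sum>k=1..N. 2 * c * (a k)^2) / 2"
  proof -
    have "(\<Sum>k=1..N. ((s (k + 1) + s (k - 1)) / s k) * (a k)^2) = (\<Sum>k=1..N. 2 * c * (a k)^2)"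
    proof (rule sum.cong[OF refl])
      fix k assume "k \<in> {1..N}"
      then have "s k > 0" "s (k - 1) + s (k + 1) = 2 * c * s k" using spos rec by auto
      then show "((s (k + 1) + s (k - 1)) / s k) * (a k)^2 = 2 * c * (a k)^2" by (simp add: field_simps)
    qed
    then show ?thesis by simp
  qed
  also have "\<dots> = c * (\<Sum>k=1..N. (a k)^2)"
  proof -
    have "(\<Sum>k=1..N. 2 * c * (a k)^2) = 2 * (c * (\<Sum>k=1..N. (a k)^2))"
      by (simp only: sum_distrib_left mult.assoc)
    then show ?thesis by simp
  qed
  finally show ?thesis .
qed

lemma eig_eq:
  fixes s :: "nat \<Rightarrow> real" and c :: real
  assumes s0: "s 0 = 0" and sN: "s (N+1) = 0"
    and rec: "\<And>k. 1 \<le> k \<Longrightarrow> k \<le> N \<Longrightarrow> s (k - 1) + s (k + 1) = 2 * c * s k"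
  shows "(\<Sum>k=1..N. s (k - 1) * s k) = c * (\<Sum>k=1..N. (s k)^2)"
proof -
  have sh: "(\<Sum>k=1..N. s (k - 1) * s k) = (\<Sum>k=1..N. s k * s (k + 1))"
    using shift_sum[of "\<lambda>j. s j * s (j+1)" N] s0 sN by simp
  have "2 * (\<Sum>k=1..N. s (k - 1) * s k) = (\<Sum>k=1..N. s k * (s (k - 1) + s (k + 1)))"
    by (subst mult_2, subst (2) sh) (simp add: sum.distrib[symmetric] algebra_simps)
  also have "\<dots> = (\<Sum>k=1..N. 2 * c * (s k)^2)"
    by (rule sum.cong[OF refl]) (use rec in \<open>auto simp: power2_eq_square\<close>)
  finally have "2 * (\<Sum>k=1..N. s (k - 1) * s k) = 2 * (c * (\<Sum>k=1..N. (s k)^2))"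
    by (simp only: sum_distrib_left mult.assoc)
  then show ?thesis by simp
qed

lemma s_rec:
  fixes N k :: nat
  assumes "1 \<le> k"
  shows "sin (real (k - 1) * pi / real (N + 1)) + sin (real (k + 1) * pi / real (N + 1))
     = 2 * cos (pi / real (N + 1)) * sin (real k * pi / real (N + 1))"
proof -
  define x where "x = real k * pi / real (N + 1)"
  define y where "y = pi / real (N + 1)"
  have "real (k - 1) * pi / real (N + 1) = x - y" using assms unfolding x_def y_def
    by (simp add: of_nat_diff diff_divide_distrib left_diff_distrib)
  moreover have "real (k + 1) * pi / real (N + 1) = x + y" unfolding x_def y_def
    by (simp add: add_divide_distrib distrib_right)
  ultimately show ?thesis unfolding x_def[symmetric] y_def[symmetric]
    by (simp add: sin_add sin_diff)
qed

lemma s_pos: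
  fixes N k :: nat
  assumes "1 \<le> k" "k \<le> N"
  shows "sin (real k * pi / real (N + 1)) > 0"
proof (rule sin_gt_zero)
  show "0 < real k * pi / real (N + 1)" using assms by simp
  have "real k / real (N + 1) < 1" using assms by simp
  then have "real k / real (N + 1) * pi < 1 * pi" by (intro mult_strict_right_mono) auto
  then show "real k * pi / real (N + 1) < pi" by simp
qed

lemma s_end: "sin (real (N + 1) * pi / real (N + 1)) = 0"
proof -
  have "real (N + 1) * pi / real (N + 1) = pi" by (simp del: of_nat_Suc)
  then show ?thesis by simp
qed

lemma cos_sum_zero:
  fixes N :: nat
  assumes "1 \<le> N"
  shows "(\<Sum>l=0..N. cos (2 * (real l * pi / real (N + 1)))) = 0"
proof -
  have nd: "\<not> int (N+1) dvd (-1)" using assms by simp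
  have "(\<Sum>l=0..N. cis (real_of_int (-1) * (2*pi*(0 - real l / real (N+1))))) = 0"
    unfolding geo[where m="-1" and N=N and \<theta>=0] if_not_P[OF nd] ..
  then have "Re (\<Sum>l=0..N. cis (real_of_int (-1) * (2*pi*(0 - real l / real (N+1))))) = 0" by simp
  moreover have "Re (\<Sum>l=0..N. cis (real_of_int (-1) * (2*pi*(0 - real l / real (N+1))))) = (\<Sum>l=0..N. cos (2 * (real l * pi / real (N + 1))))"
  proof -
    have "real_of_int (-1) * (2*pi*(0 - real l / real (N+1))) = 2 * (real l * pi / real (N + 1))" for l :: nat
      by simp
    then show ?thesis by (simp only: Re_sum cis.sel)
  qed
  ultimately show ?thesis by simp
qed

lemma sumsq:
  fixes N :: nat
  assumes "1 \<le> N"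
  shows "(\<Sum>k=1..N. (sin (real k * pi / real (N + 1)))^2) = real (N + 1) / 2"
proof -
  have "(\<Sum>k=0..N. (sin (real k * pi / real (N + 1)))^2) = (\<Sum>k=0..N. (1 - cos (2 * (real k * pi / real (N + 1)))) / 2)"
    by (rule sum.cong[OF refl]) (subst cos_double_sin, simp)
  also have "\<dots> = (real (N + 1) - (\<Sum>k=0..N. cos (2 * (real k * pi / real (N + 1))))) / 2"
    by (simp add: sum_divide_distrib[symmetric] sum_subtractf)
  also have "\<dots> = real (N + 1) / 2" using cos_sum_zero[OF assms] by simp
  finally have "(\<Sum>k=0..N. (sin (real k * pi / real (N + 1)))^2) = real (N + 1) / 2" .
  moreover have "(\<Sum>k=0..N. (sin (real k * pi / real (N + 1)))^2) = (\<Sum>k=1..N. (sin (real k * pi / real (N + 1)))^2)"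
    by (simp add: sum.atLeast_Suc_atMost)
  ultimately show ?thesis by simp
qed

lemma half_angle: "1 - cos (pi / real (N + 1)) = 2 * (sin (pi / real (2 * N + 2)))^2"
proof -
  have e: "pi / real (N + 1) = 2 * (pi / real (2 * N + 2))" by (simp add: field_simps)
  show ?thesis unfolding e cos_double_sin by simp
qed

theorem mainTheorem6:
  fixes N :: nat and \<theta> :: real
  assumes "N \<ge> 1" and "0 \<le> \<theta>" and "\<theta> < 1"
  shows "(\<forall>a. (\<Sum>k=0..N. (a k)^2) = 1 \<longrightarrow>
            W N a \<theta> = 1 - (\<Sum>k=1..N. a (k - 1) * a k) - a 0 * a N * cos (2 * pi * real (N + 1) * \<theta>))
       \<and> (\<forall>a \<theta>'. (\<Sum>k=0..N. (a k)^2) = 1 \<and> a 0 = 0 \<and> 0 \<le> \<theta>' \<and> \<theta>' < 1 \<longrightarrow>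
            W N a \<theta>' = W N a \<theta>)
       \<and> (\<forall>a. a 0 = 0 \<and> (\<Sum>k=1..N. (a k)^2) = 1 \<longrightarrow>
                 2 * (sin (pi / real (2 * N + 2)))^2 \<le> W N a \<theta>)
       \<and> a_opt N 0 = 0 \<and> (\<Sum>k=1..N. (a_opt N k)^2) = 1
       \<and> W N (a_opt N) \<theta> = 2 * (sin (pi / real (2 * N + 2)))^2"
proof -
  define s where "s k = sin (real k * pi / real (N + 1))" for k
  define c where "c = cos (pi / real (N + 1))"
  have s0: "s 0 = 0" by (simp add: s_def)
  have sN: "s (N + 1) = 0" unfolding s_def by (rule s_end)
  have spos: "\<And>k. 1 \<le> k \<Longrightarrow> k \<le> N \<Longrightarrow> s k > 0" unfolding s_def by (rule s_pos)
  have rec: "\<And>k. 1 \<le> k \<Longrightarrow> k \<le> N \<Longrightarrow> s (k - 1) + s (k + 1) = 2 * c * s k"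
    unfolding s_def c_def by (rule s_rec)
  have ss: "(\<Sum>k=1..N. (s k)^2) = real (N + 1) / 2" unfolding s_def using assms(1) by (rule sumsq)
  have ha: "1 - c = 2 * (sin (pi / real (2 * N + 2)))^2" unfolding c_def by (rule half_angle)
  have split0: "(\<Sum>k=0..N. f k) = f 0 + (\<Sum>k=1..N. f k)" for f :: "nat \<Rightarrow> real"
    by (simp add: sum.atLeast_Suc_atMost)
  have P1: "\<forall>a. (\<Sum>k=0..N. (a k)^2) = 1 \<longrightarrow>
            W N a \<theta> = 1 - (\<Sum>k=1..N. a (k - 1) * a k) - a 0 * a N * cos (2 * pi * real (N + 1) * \<theta>)"
    using W_formula by blast
  have P2: "\<forall>a \<theta>'. (\<Sum>k=0..N. (a k)^2) = 1 \<and> a 0 = 0 \<and> 0 \<le> \<theta>' \<and> \<theta>' < 1 \<longrightarrow>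
            W N a \<theta>' = W N a \<theta>"
    using W_formula by simp
  have P3: "\<forall>a. a 0 = 0 \<and> (\<Sum>k=1..N. (a k)^2) = 1 \<longrightarrow>
                 2 * (sin (pi / real (2 * N + 2)))^2 \<le> W N a \<theta>"
  proof (intro allI impI)
    fix a :: "nat \<Rightarrow> real"
    assume h: "a 0 = 0 \<and> (\<Sum>k=1..N. (a k)^2) = 1"
    then have "(\<Sum>k=0..N. (a k)^2) = 1" using split0[of "\<lambda>k. (a k)^2"] by simp
    then have "W N a \<theta> = 1 - (\<Sum>k=1..N. a (k - 1) * a k)" using W_formula h by simp
    moreover have "(\<Sum>k=1..N. a (k - 1) * a k) \<le> c * (\<Sum>k=1..N. (a k)^2)"
      by (rule eig_bound[OF s0 sN spos rec]) (use h in auto)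
    ultimately show "2 * (sin (pi / real (2 * N + 2)))^2 \<le> W N a \<theta>" using h ha by simp
  qed
  have aopt: "a_opt N k = sqrt (2 / real (N + 1)) * s k" for k unfolding a_opt_def s_def ..
  have sq: "(sqrt (2 / real (N + 1)))^2 = 2 / real (N + 1)" by simp
  have P4: "a_opt N 0 = 0" by (simp add: a_opt_def)
  have P5: "(\<Sum>k=1..N. (a_opt N k)^2) = 1"
  proof -
    have "(\<Sum>k=1..N. (a_opt N k)^2) = (2 / real (N + 1)) * (\<Sum>k=1..N. (s k)^2)"
      unfolding aopt power_mult_distrib sq sum_distrib_left ..
    also have "\<dots> = 1" unfolding ss by (simp del: of_nat_Suc)
    finally show ?thesis .
  qed
  have P6: "W N (a_opt N) \<theta> = 2 * (sin (pi / real (2 * N + 2)))^2"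
  proof -
    have "(\<Sum>k=0..N. (a_opt N k)^2) = 1" using split0[of "\<lambda>k. (a_opt N k)^2"] P4 P5 by simp
    then have "W N (a_opt N) \<theta> = 1 - (\<Sum>k=1..N. a_opt N (k - 1) * a_opt N k)" using W_formula P4 by simp
    also have "(\<Sum>k=1..N. a_opt N (k - 1) * a_opt N k) = (2 / real (N + 1)) * (\<Sum>k=1..N. s (k - 1) * s k)"
    proof -
      have "a_opt N (k - 1) * a_opt N k = (2 / real (N + 1)) * (s (k - 1) * s k)" for k
        unfolding aopt by (simp add: algebra_simps)
      then show ?thesis by (simp add: sum_distrib_left)
    qed
    also have "(\<Sum>k=1..N. s (k - 1) * s k) = c * (\<Sum>k=1..N. (s k)^2)"
      by (rule eig_eq[OF s0 sN rec])
    also have "1 - 2 / real (N + 1) * (c * (\<Sum>k=1..N. (s k)^2)) = 1 - c"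
      unfolding ss by (simp del: of_nat_Suc)
    finally show ?thesis using ha by simp
  qed
  show ?thesis using P1 P2 P3 P4 P5 P6 by blast
qed
end
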